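(* Let $d_n=2^n\Delta_n+\tfrac12$. Then as $n\to\infty$, $$2^{-n}d_n=\frac{1}{2\sqrt\pi}\,\frac{\Gamma(n+1/2)}{\Gamma(n+1)}+O(n^{-3/2}),\qquad\text{and}\qquad \Delta_n=\frac{1}{2\sqrt{\pi n}}+O(n^{-3/2}).$$
   Context: A fair coin is flipped $n$ times, producing a sequence $x_1,\dots,x_n\in\{H,T\}$ of independent uniformly random outcomes. Alice's score is the number of indices $i\in\{1,\dots,n-1\}$ with $(x_i,x_{i+1})=(H,H)$; Bob's score is the number of indices $i\in\{1,\dots,n-1\}$ with $(x_i,x_{i+1})=(H,T)$. $\Delta_n$ is the probability that Bob's score strictly exceeds Alice's minus the probability that Alice's score strictly exceeds Bob's. *)

theory Defs
  imports "HOL-Analysis.Analysis" "HOL-Library.Landau_Symbols"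
begin

text \<open>Coin sequences of length n are lists of booleans; True = H, False = T.
  Each of the 2^n sequences has probability 2^(-n).\<close>

definition coin_seqs :: "nat \<Rightarrow> bool list set" where
  "coin_seqs n = {xs. length xs = n}"

definition alice_score :: "bool list \<Rightarrow> nat" where
  "alice_score xs = card {i. i + 1 < length xs \<and> xs ! i \<and> xs ! (i + 1)}"

definition bob_score :: "bool list \<Rightarrow> nat" where
  "bob_score xs = card {i. i + 1 < length xs \<and> xs ! i \<and> \<not> xs ! (i + 1)}"

definition Delta :: "nat \<Rightarrow> real" where
  "Delta n = (real (card {xs \<in> coin_seqs n. bob_score xs > alice_score xs})
              - real (card {xs \<in> coin_seqs n. alice_score xs > bob_score xs})) / 2 ^ n"

definition dseq :: "nat \<Rightarrow> real" where
  "dseq n = 2 ^ n * Delta n + 1 / 2"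

end

theory Submission
  imports Defs "HOL-Computational_Algebra.Formal_Power_Series" "HOL-Real_Asymp.Real_Asymp"
begin


lemma pairs_snoc:
  "card {i. i + 1 < length (xs @ [x]) \<and> P ((xs @ [x]) ! i) ((xs @ [x]) ! (i + 1))}
   = card {i. i + 1 < length xs \<and> P (xs ! i) (xs ! (i + 1))} + (if xs \<noteq> [] \<and> P (last xs) x then 1 else 0)"
proof -
  let ?S = "{i. i + 1 < length xs \<and> P (xs ! i) (xs ! (i + 1))}"
  let ?T = "(if xs \<noteq> [] \<and> P (last xs) x then {length xs - 1} else {})"
  have eq: "{i. i + 1 < length (xs @ [x]) \<and> P ((xs @ [x]) ! i) ((xs @ [x]) ! (i + 1))} = ?S \<union> ?T"
  proof (intro set_eqI iffI)
    fix i assume "i \<in> {i. i + 1 < length (xs @ [x]) \<and> P ((xs @ [x]) ! i) ((xs @ [x]) ! (i + 1))}"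
    then have i: "i + 1 < length xs + 1" and p: "P ((xs @ [x]) ! i) ((xs @ [x]) ! (i + 1))" by auto
    show "i \<in> ?S \<union> ?T"
    proof (cases "i + 1 < length xs")
      case True
      then show ?thesis using p by (auto simp: nth_append)
    next
      case False
      then have "i + 1 = length xs" using i by simp
      then have "xs \<noteq> []" "i = length xs - 1" by auto
      then show ?thesis using p \<open>i + 1 = length xs\<close> by (auto simp: nth_append last_conv_nth)
    qed
  next
    fix i assume "i \<in> ?S \<union> ?T"
    then show "i \<in> {i. i + 1 < length (xs @ [x]) \<and> P ((xs @ [x]) ! i) ((xs @ [x]) ! (i + 1))}"
      by (auto simp: nth_append last_conv_nth split: if_splits)
  qed
  have fin: "finite ?S" by (rule finite_subset[of _ "{..<length xs}"]) auto
  have dis: "?S \<inter> ?T = {}" by auto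
  show ?thesis unfolding eq by (subst card_Un_disjoint[OF fin _ dis]) auto
qed

lemma alice_snoc: "alice_score (xs @ [x]) = alice_score xs + (if xs \<noteq> [] \<and> last xs \<and> x then 1 else 0)"
  unfolding alice_score_def using pairs_snoc[where P="\<lambda>a b. a \<and> b" and xs=xs and x=x] by simp

lemma bob_snoc: "bob_score (xs @ [x]) = bob_score xs + (if xs \<noteq> [] \<and> last xs \<and> \<not> x then 1 else 0)"
  unfolding bob_score_def using pairs_snoc[where P="\<lambda>a b. a \<and> \<not> b" and xs=xs and x=x] by simp

lemma bob_le: "bob_score xs \<le> length xs"
proof -
  have "bob_score xs \<le> card {..<length xs}" unfolding bob_score_def by (rule card_mono) auto
  then show ?thesis by simp
qed

lemma finite_coin: "finite (coin_seqs n)"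
proof -
  have "coin_seqs n = {xs. set xs \<subseteq> (UNIV :: bool set) \<and> length xs = n}" by (auto simp: coin_seqs_def)
  then show ?thesis using finite_lists_length_eq[of "UNIV :: bool set" n] by simp
qed

lemma sum_coin_Suc:
  "(\<Sum>xs\<in>coin_seqs (Suc n). f xs) = (\<Sum>ys\<in>coin_seqs n. f (ys @ [True]) + f (ys @ [False]))"
proof -
  have eq: "coin_seqs (Suc n) = (\<lambda>p. fst p @ [snd p]) ` (coin_seqs n \<times> UNIV)"
  proof (intro set_eqI iffI)
    fix xs assume "xs \<in> coin_seqs (Suc n)"
    then have l: "length xs = Suc n" by (simp add: coin_seqs_def)
    then have "xs \<noteq> []" by auto
    then have "xs = butlast xs @ [last xs]" by simp
    moreover have "(butlast xs, last xs) \<in> coin_seqs n \<times> UNIV" using l by (simp add: coin_seqs_def)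
    ultimately show "xs \<in> (\<lambda>p. fst p @ [snd p]) ` (coin_seqs n \<times> UNIV)"
      by (metis (no_types, lifting) fst_conv image_eqI snd_conv)
  qed (auto simp: coin_seqs_def)
  have inj: "inj_on (\<lambda>p. fst p @ [snd p]) (coin_seqs n \<times> (UNIV :: bool set))"
    by (auto simp: inj_on_def)
  have "(\<Sum>xs\<in>coin_seqs (Suc n). f xs) = (\<Sum>p\<in>coin_seqs n \<times> UNIV. f (fst p @ [snd p]))"
    unfolding eq by (subst sum.reindex[OF inj]) simp
  also have "\<dots> = (\<Sum>ys\<in>coin_seqs n. \<Sum>b\<in>UNIV. f (ys @ [b]))"
    unfolding sum.cartesian_product by (simp add: case_prod_unfold)
  also have "\<dots> = (\<Sum>ys\<in>coin_seqs n. f (ys @ [True]) + f (ys @ [False]))"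
    by (simp add: UNIV_bool add.commute)
  finally show ?thesis .
qed

definition hL :: "bool list \<Rightarrow> bool" where "hL xs = (xs \<noteq> [] \<and> last xs)"

definition NH :: "nat \<Rightarrow> nat \<Rightarrow> nat \<Rightarrow> nat" where
  "NH n a b = (\<Sum>xs\<in>coin_seqs n. if hL xs \<and> alice_score xs = a \<and> bob_score xs = b then 1 else 0)"
definition NT :: "nat \<Rightarrow> nat \<Rightarrow> nat \<Rightarrow> nat" where
  "NT n a b = (\<Sum>xs\<in>coin_seqs n. if \<not> hL xs \<and> alice_score xs = a \<and> bob_score xs = b then 1 else 0)"

lemma alice_T: "alice_score (ys @ [True]) = alice_score ys + (if hL ys then 1 else 0)"
  by (simp add: alice_snoc hL_def)
lemma alice_F: "alice_score (ys @ [False]) = alice_score ys"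
  by (simp add: alice_snoc)
lemma bob_T: "bob_score (ys @ [True]) = bob_score ys"
  by (simp add: bob_snoc)
lemma bob_F: "bob_score (ys @ [False]) = bob_score ys + (if hL ys then 1 else 0)"
  by (simp add: bob_snoc hL_def)
lemma hL_T: "hL (ys @ [True])" and hL_F: "\<not> hL (ys @ [False])"
  by (simp_all add: hL_def)

lemma NH_Suc_0: "NH (Suc n) 0 b = NT n 0 b"
  unfolding NH_def NT_def sum_coin_Suc
  by (rule sum.cong) (auto simp: alice_T alice_F bob_T bob_F hL_T hL_F)

lemma NH_Suc_Suc: "NH (Suc n) (Suc a) b = NT n (Suc a) b + NH n a b"
  unfolding NH_def NT_def sum_coin_Suc sum.distrib[symmetric]
  by (rule sum.cong) (auto simp: alice_T alice_F bob_T bob_F hL_T hL_F)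

lemma NT_Suc_0: "NT (Suc n) a 0 = NT n a 0"
  unfolding NH_def NT_def sum_coin_Suc
  by (rule sum.cong) (auto simp: alice_T alice_F bob_T bob_F hL_T hL_F)

lemma NT_Suc_Suc: "NT (Suc n) a (Suc b) = NT n a (Suc b) + NH n a b"
  unfolding NH_def NT_def sum_coin_Suc sum.distrib[symmetric]
  by (rule sum.cong) (auto simp: alice_T alice_F bob_T bob_F hL_T hL_F)

lemma coin0: "coin_seqs 0 = {[]}" by (auto simp: coin_seqs_def)

lemma NH_0: "NH 0 a b = 0" by (simp add: NH_def coin0 hL_def)
lemma NT_0: "NT 0 a b = (if a = 0 \<and> b = 0 then 1 else 0)"
  by (simp add: NT_def coin0 hL_def alice_score_def bob_score_def)

definition fH :: "nat \<Rightarrow> nat \<Rightarrow> nat \<Rightarrow> nat" where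
  "fH n a b = (if a + b + 1 \<le> n then ((a + b) choose b) * ((n - 1 - a - b) choose b) else 0)"
definition fT :: "nat \<Rightarrow> nat \<Rightarrow> nat \<Rightarrow> nat" where
  "fT n a b = (if b = 0 then (if a = 0 then 1 else 0)
     else if a + b \<le> n then ((a + b - 1) choose (b - 1)) * ((n - a - b) choose b) else 0)"

lemma NH_NT_closed: "NH n a b = fH n a b \<and> NT n a b = fT n a b"
proof (induction n arbitrary: a b)
  case 0
  then show ?case by (simp add: NH_0 NT_0 fH_def fT_def)
next
  case (Suc n)
  have H: "NH (Suc n) a b = fH (Suc n) a b"
  proof (cases a)
    case 0
    then show ?thesis using Suc.IH by (simp add: NH_Suc_0 fH_def fT_def)
  next
    case (Suc a')
    have e: "NH (Suc n) a b = fT n (Suc a') b + fH n a' b"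
      using Suc.IH by (simp add: NH_Suc_Suc Suc)
    show ?thesis
    proof (cases b)
      case 0
      then show ?thesis using e by (simp add: fH_def fT_def Suc)
    next
      case (Suc b')
      show ?thesis
      proof (cases "a' + b + 1 \<le> n")
        case True
        have "(Suc a' + b choose b) = (a' + b choose b') + (a' + b choose b)"
          using Suc by simp
        then show ?thesis using e True \<open>a = Suc a'\<close> Suc
          by (simp add: fH_def fT_def algebra_simps)
      next
        case False
        then show ?thesis using e \<open>a = Suc a'\<close> Suc by (simp add: fH_def fT_def)
      qed
    qed
  qed
  have T: "NT (Suc n) a b = fT (Suc n) a b"
  proof (cases b)
    case 0
    then show ?thesis using Suc.IH by (simp add: NT_Suc_0 fT_def)
  next
    case (Suc b')
    have e: "NT (Suc n) a b = fT n a (Suc b') + fH n a b'"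
      using Suc.IH by (simp add: NT_Suc_Suc Suc)
    show ?thesis
    proof (cases "a + b \<le> n")
      case True
      have "(Suc (n - a - b) choose b) = (n - a - b choose b') + (n - a - b choose b)"
        using Suc by simp
      moreover have "Suc n - a - b = Suc (n - a - b)" using True by simp
      moreover have "n - 1 - a - b' = n - a - b" using Suc by simp
      ultimately show ?thesis using e True Suc
        by (simp add: fH_def fT_def algebra_simps)
    next
      case False
      show ?thesis
      proof (cases "a + b = Suc n")
        case True
        then show ?thesis using e Suc by (simp add: fH_def fT_def)
      next
        case False
        then show ?thesis using e Suc \<open>\<not> a + b \<le> n\<close> by (simp add: fH_def fT_def)
      qed
    qed
  qed
  show ?case using H T by simp
qed

definition Dz :: "nat \<Rightarrow> int" where
  "Dz n = (\<Sum>xs\<in>coin_seqs n. sgn (int (bob_score xs) - int (alice_score xs)))"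

lemma alice_le: "alice_score xs \<le> length xs"
proof -
  have "alice_score xs \<le> card {..<length xs}" unfolding alice_score_def by (rule card_mono) auto
  then show ?thesis by simp
qed

lemma sum_pick: "c \<le> (n::nat) \<Longrightarrow> (\<Sum>b\<le>n. if c = b then x else 0) = x"
  by (simp add: sum.delta)

lemma sum_diag:
  "(\<Sum>b\<le>n. NH n (Suc b) b) = (\<Sum>ys\<in>coin_seqs n. if hL ys \<and> alice_score ys = Suc (bob_score ys) then 1 else 0)"
proof -
  have "(\<Sum>b\<le>n. NH n (Suc b) b) = (\<Sum>ys\<in>coin_seqs n. \<Sum>b\<le>n. if hL ys \<and> alice_score ys = Suc b \<and> bob_score ys = b then 1 else 0)"
    unfolding NH_def by (rule sum.swap)
  also have "\<dots> = (\<Sum>ys\<in>coin_seqs n. if hL ys \<and> alice_score ys = Suc (bob_score ys) then 1 else 0)"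
  proof (rule sum.cong[OF refl])
    fix ys assume "ys \<in> coin_seqs n"
    then have le: "bob_score ys \<le> n" using bob_le[of ys] by (simp add: coin_seqs_def)
    have "(\<Sum>b\<le>n. if hL ys \<and> alice_score ys = Suc b \<and> bob_score ys = b then 1 else 0 :: nat)
        = (\<Sum>b\<le>n. if bob_score ys = b then (if hL ys \<and> alice_score ys = Suc (bob_score ys) then 1 else 0) else 0)"
      by (rule sum.cong) auto
    also have "\<dots> = (if hL ys \<and> alice_score ys = Suc (bob_score ys) then 1 else 0)"
      using le by (rule sum_pick)
    finally show "(\<Sum>b\<le>n. if hL ys \<and> alice_score ys = Suc b \<and> bob_score ys = b then 1 else 0 :: nat)
        = (if hL ys \<and> alice_score ys = Suc (bob_score ys) then 1 else 0)" .
  qed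
  finally show ?thesis .
qed

lemma sum_diag2:
  "(\<Sum>a\<le>n. NH n a (Suc a)) = (\<Sum>ys\<in>coin_seqs n. if hL ys \<and> bob_score ys = Suc (alice_score ys) then 1 else 0)"
proof -
  have "(\<Sum>a\<le>n. NH n a (Suc a)) = (\<Sum>ys\<in>coin_seqs n. \<Sum>a\<le>n. if hL ys \<and> alice_score ys = a \<and> bob_score ys = Suc a then 1 else 0)"
    unfolding NH_def by (rule sum.swap)
  also have "\<dots> = (\<Sum>ys\<in>coin_seqs n. if hL ys \<and> bob_score ys = Suc (alice_score ys) then 1 else 0)"
  proof (rule sum.cong[OF refl])
    fix ys assume "ys \<in> coin_seqs n"
    then have le: "alice_score ys \<le> n" using alice_le[of ys] by (simp add: coin_seqs_def)
    have "(\<Sum>a\<le>n. if hL ys \<and> alice_score ys = a \<and> bob_score ys = Suc a then 1 else 0 :: nat)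
        = (\<Sum>a\<le>n. if alice_score ys = a then (if hL ys \<and> bob_score ys = Suc (alice_score ys) then 1 else 0) else 0)"
      by (rule sum.cong) auto
    also have "\<dots> = (if hL ys \<and> bob_score ys = Suc (alice_score ys) then 1 else 0)"
      using le by (rule sum_pick)
    finally show "(\<Sum>a\<le>n. if hL ys \<and> alice_score ys = a \<and> bob_score ys = Suc a then 1 else 0 :: nat)
        = (if hL ys \<and> bob_score ys = Suc (alice_score ys) then 1 else 0)" .
  qed
  finally show ?thesis .
qed

lemma Dz_Suc:
  "Dz (Suc n) = 2 * Dz n + int (\<Sum>b\<le>n. NH n (Suc b) b) - int (\<Sum>a\<le>n. NH n a (Suc a))"
proof -
  have pt: "sgn (int (bob_score (ys @ [True])) - int (alice_score (ys @ [True])))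
          + sgn (int (bob_score (ys @ [False])) - int (alice_score (ys @ [False])))
          = 2 * sgn (int (bob_score ys) - int (alice_score ys))
            + int (if hL ys \<and> alice_score ys = Suc (bob_score ys) then 1 else 0)
            - int (if hL ys \<and> bob_score ys = Suc (alice_score ys) then 1 else 0)" for ys
    by (cases "hL ys") (auto simp: alice_T alice_F bob_T bob_F sgn_if)
  have "Dz (Suc n) = (\<Sum>ys\<in>coin_seqs n. 2 * sgn (int (bob_score ys) - int (alice_score ys))
            + int (if hL ys \<and> alice_score ys = Suc (bob_score ys) then 1 else 0)
            - int (if hL ys \<and> bob_score ys = Suc (alice_score ys) then 1 else 0))"
    unfolding Dz_def sum_coin_Suc pt ..
  also have "\<dots> = 2 * Dz n + int (\<Sum>ys\<in>coin_seqs n. if hL ys \<and> alice_score ys = Suc (bob_score ys) then 1 else 0)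
       - int (\<Sum>ys\<in>coin_seqs n. if hL ys \<and> bob_score ys = Suc (alice_score ys) then 1 else 0)"
    by (simp add: Dz_def sum.distrib sum_subtractf sum_distrib_left)
  finally show ?thesis by (simp only: sum_diag sum_diag2)
qed

definition cterm :: "nat \<Rightarrow> nat \<Rightarrow> nat" where
  "cterm n k = ((2 * k) choose k) * ((n - 2 * k) choose k)"
definition ce :: "nat \<Rightarrow> nat" where
  "ce n = (\<Sum>k\<le>n. cterm n k)"

lemma cterm_zero: "n < k \<Longrightarrow> cterm n k = 0"
  by (simp add: cterm_def)

lemma ce_ext: "n \<le> M \<Longrightarrow> ce n = (\<Sum>k\<le>M. cterm n k)"
proof -
  assume "n \<le> M"
  then have "{..M} = {..n} \<union> {n<..M}" by auto
  moreover have "(\<Sum>k\<in>{n<..M}. cterm n k) = 0" by (auto intro: sum.neutral cterm_zero)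
  moreover have "sum (cterm n) ({..n} \<union> {n<..M}) = sum (cterm n) {..n} + sum (cterm n) {n<..M}"
    by (rule sum.union_disjoint) auto
  ultimately show ?thesis unfolding ce_def by simp
qed

lemma term_id:
  "cterm (Suc n) (Suc b) + 2 * fH n b (Suc b) = 2 * cterm n (Suc b) + 2 * fH n (Suc b) b"
proof -
  have c2: "(2 * Suc b) choose (Suc b) = 2 * ((2 * b + 1) choose b)"
  proof -
    have "(2 * Suc b) choose (Suc b) = ((2 * b + 1) choose b) + ((2 * b + 1) choose (Suc b))"
      by simp
    moreover have "(2 * b + 1) choose (Suc b) = (2 * b + 1) choose b"
      using binomial_symmetric[of "Suc b" "2 * b + 1"] by simp
    ultimately show ?thesis by simp
  qed
  have c3: "(2 * b + 1) choose (Suc b) = (2 * b + 1) choose b"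
    using binomial_symmetric[of "Suc b" "2 * b + 1"] by simp
  define c where "c = (2 * b + 1) choose b"
  show ?thesis
  proof (cases "2 * b + 2 \<le> n")
    case True
    define m where "m = n - 2 * b - 2"
    have m1: "Suc n - 2 * Suc b = Suc m" using True by (simp add: m_def)
    have m2: "n - 2 * Suc b = m" by (simp add: m_def)
    have m3: "n - 1 - b - Suc b = m" using True by (simp add: m_def)
    have m4: "n - 1 - Suc b - b = m" using True by (simp add: m_def)
    have p: "Suc m choose Suc b = (m choose b) + (m choose Suc b)" by simp
    have e1: "cterm (Suc n) (Suc b) = 2 * c * ((m choose b) + (m choose Suc b))"
      unfolding cterm_def m1 c2 p c_def by simp
    have e2: "cterm n (Suc b) = 2 * c * (m choose Suc b)"
      unfolding cterm_def m2 c2 c_def by simp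
    have t3: "b + Suc b + 1 \<le> n" "b + Suc b = 2 * b + 1" using True by auto
    have e3: "fH n b (Suc b) = c * (m choose Suc b)"
      unfolding fH_def unfolding if_P[OF t3(1)] unfolding t3(2) m3 c3 c_def ..
    have t4: "Suc b + b + 1 \<le> n" "Suc b + b = 2 * b + 1" using True by auto
    have e4: "fH n (Suc b) b = c * (m choose b)"
      unfolding fH_def unfolding if_P[OF t4(1)] unfolding t4(2) m4 c_def ..
    show ?thesis unfolding e1 e2 e3 e4 by (simp add: algebra_simps)
  next
    case False
    then have "Suc n - 2 * Suc b = 0" "n - 2 * Suc b = 0" by auto
    then show ?thesis using False unfolding cterm_def fH_def by simp
  qed
qed

lemma Dz_ce: "2 * Dz n + 1 = int (ce n)"
proof (induction n)
  case 0
  show ?case by (simp add: Dz_def coin0 ce_def cterm_def alice_score_def bob_score_def)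
next
  case (Suc n)
  have X1: "(\<Sum>b\<le>n. NH n (Suc b) b) = (\<Sum>b\<le>n. fH n (Suc b) b)"
    using NH_NT_closed by simp
  have X2: "(\<Sum>a\<le>n. NH n a (Suc a)) = (\<Sum>a\<le>n. fH n a (Suc a))"
    using NH_NT_closed by simp
  have c0: "cterm m 0 = 1" for m by (simp add: cterm_def)
  have ceS: "ce (Suc n) = 1 + (\<Sum>b\<le>n. cterm (Suc n) (Suc b))"
    unfolding ce_def sum.atMost_Suc_shift c0 ..
  have cen: "ce n = 1 + (\<Sum>b\<le>n. cterm n (Suc b))"
    by (subst ce_ext[of n "Suc n"]) (simp_all only: sum.atMost_Suc_shift c0 le_Suc_eq, simp)
  have key: "ce (Suc n) + 1 + 2 * (\<Sum>a\<le>n. fH n a (Suc a)) = 2 * ce n + 2 * (\<Sum>b\<le>n. fH n (Suc b) b)"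
  proof -
    have "(\<Sum>b\<le>n. cterm (Suc n) (Suc b) + 2 * fH n b (Suc b)) = (\<Sum>b\<le>n. 2 * cterm n (Suc b) + 2 * fH n (Suc b) b)"
      using term_id by simp
    then show ?thesis unfolding ceS cen by (simp add: sum.distrib sum_distrib_left algebra_simps)
  qed
  have keyi: "int (ce (Suc n)) + 1 + 2 * int (\<Sum>a\<le>n. fH n a (Suc a)) = 2 * int (ce n) + 2 * int (\<Sum>b\<le>n. fH n (Suc b) b)"
    using arg_cong[OF key, of int] by simp
  have ds: "Dz (Suc n) = 2 * Dz n + int (\<Sum>b\<le>n. fH n (Suc b) b) - int (\<Sum>a\<le>n. fH n a (Suc a))"
    using Dz_Suc[of n] unfolding X1 X2 .
  show ?case using ds keyi Suc.IH by linarith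
qed


unbundle no vec_syntax
notation fps_nth (infixl \<open>$\<close> 75)


lemma gch_Suc: "(a::real) gchoose (Suc k) = (a gchoose k) * (a - real k) / real (Suc k)"
proof -
  have "fact (Suc k) * (a gchoose Suc k) = (\<Prod>i = 0..<Suc k. a - of_nat i)"
    by (rule gbinomial_mult_fact)
  also have "\<dots> = (\<Prod>i = 0..<k. a - of_nat i) * (a - real k)" by simp
  also have "(\<Prod>i = 0..<k. a - of_nat i) = fact k * (a gchoose k)"
    by (rule gbinomial_mult_fact[symmetric])
  finally have "fact (Suc k) * (a gchoose Suc k) = fact k * (a gchoose k) * (a - real k)" .
  then have "fact k * (real (Suc k) * (a gchoose Suc k)) = fact k * ((a gchoose k) * (a - real k))"
    by (simp add: algebra_simps del: of_nat_Suc)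
  then have "real (Suc k) * (a gchoose Suc k) = (a gchoose k) * (a - real k)"
    by (metis fact_nonzero mult_left_cancel)
  then show ?thesis by (simp add: field_simps del: of_nat_Suc)
qed

definition Bh :: "real fps" where "Bh = fps_binomial (-1/2)"

lemma Bh_sq: "Bh * Bh * (1 + fps_X) = 1"
proof -
  have "Bh * Bh * (1 + fps_X) = fps_binomial (-1/2 + -1/2 + 1)"
    unfolding Bh_def fps_binomial_add_mult fps_binomial_1 ..
  then show ?thesis by simp
qed

lemma key_sq:
  assumes c0: "c $ 0 = 0"
  shows "(Bh oo c) * (Bh oo c) * (1 + c) = 1"
proof -
  have "(Bh * Bh * (1 + fps_X)) oo c = 1" unfolding Bh_sq by simp
  moreover have "(Bh * Bh * (1 + fps_X)) oo c = (Bh oo c) * (Bh oo c) * (1 + c)"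
    using c0 by (simp add: fps_compose_mult_distrib fps_compose_add_distrib)
  ultimately show ?thesis by simp
qed

definition W :: "real fps" where "W = Abs_fps (\<lambda>_. 1)"

lemma W_mult: "W * (1 - fps_X) = 1"
  by (simp add: fps_eq_iff W_def fps_mult_nth algebra_simps sum.atLeast0_atMost_Suc_shift)

definition X2 :: "real fps" where "X2 = fps_const (-2) * fps_X"
definition A :: "real fps" where "A = Bh oo X2"
definition U :: "real fps" where "U = fps_X^2 - fps_const 2 * fps_X^3"
definition G :: "real fps" where "G = Bh oo U"
definition V :: "real fps" where "V = fps_const (-4) * fps_X^3 * W"
definition Ed :: "real fps" where "Ed = (Bh oo V) * W"
definition T :: "real fps" where "T = A * G"
definition P :: "real fps" where "P = (1 - fps_X) * (1 - fps_X - fps_const 4 * fps_X^3)"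

lemma X2_0: "X2 $ 0 = 0" by (simp add: X2_def)
lemma U_0: "U $ 0 = 0" by (simp add: U_def)
lemma V_0: "V $ 0 = 0" by (simp add: V_def)

lemma poly_id: "(1 + X2) * (1 + U) = P"
  unfolding X2_def U_def P_def
  by (simp add: algebra_simps power2_eq_square power3_eq_cube flip: fps_const_neg fps_const_mult)

lemma P_V: "P = (1 - fps_X) * ((1 - fps_X) * (1 + V))"
proof -
  have "(1 - fps_X) * V = fps_const (-4) * fps_X^3 * (W * (1 - fps_X))"
    unfolding V_def by (simp add: algebra_simps)
  then have "(1 - fps_X) * V = - (fps_const 4 * fps_X^3)" by (simp add: W_mult flip: fps_const_neg)
  moreover have "(1 - fps_X) * (1 + V) = (1 - fps_X) + (1 - fps_X) * V" by (simp add: distrib_left)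
  ultimately have "(1 - fps_X) * (1 + V) = 1 - fps_X - fps_const 4 * fps_X^3" by simp
  then show ?thesis unfolding P_def by simp
qed

lemma Ed_sq: "Ed * Ed * P = 1"
proof -
  have "Ed * Ed * P = ((Bh oo V) * (Bh oo V) * (1 + V)) * (W * (1 - fps_X)) * (W * (1 - fps_X))"
    unfolding Ed_def P_V by (simp add: algebra_simps)
  then show ?thesis using key_sq[OF V_0] W_mult by simp
qed

lemma T_sq: "T * T * P = 1"
proof -
  have "T * T * P = (A * A * (1 + X2)) * (G * G * (1 + U))"
    unfolding T_def poly_id[symmetric] by (simp add: algebra_simps)
  then show ?thesis using key_sq[OF X2_0] key_sq[OF U_0] unfolding A_def G_def by simp
qed

lemma Ed_eq_T: "Ed = T"
proof -
  have "Ed * Ed = T * T"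
  proof -
    have "Ed * Ed = Ed * Ed * (T * T * P)" using T_sq by simp
    also have "\<dots> = T * T * (Ed * Ed * P)" by (simp add: algebra_simps)
    also have "\<dots> = T * T" using Ed_sq by simp
    finally show ?thesis .
  qed
  then have "(Ed - T) * (Ed + T) = 0" by (simp add: algebra_simps)
  moreover have "(Ed + T) $ 0 = 2"
    by (simp add: Ed_def T_def A_def G_def W_def Bh_def)
  then have "Ed + T \<noteq> 0" by (metis fps_zero_nth zero_neq_numeral)
  ultimately show ?thesis by simp
qed

lemma compose_mult_nth:
  assumes c0: "c $ 0 = 0"
  shows "((f oo c) * h) $ n = (\<Sum>i=0..n. f $ i * (c^i * h) $ n)"
proof -
  have z: "j < i \<Longrightarrow> (c^i) $ j = 0" for i j using startsby_zero_power_prefix[OF c0] by blast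
  have "((f oo c) * h) $ n = (\<Sum>j=0..n. (\<Sum>i=0..j. f $ i * (c^i) $ j) * h $ (n - j))"
    by (simp add: fps_mult_nth fps_compose_nth)
  also have "\<dots> = (\<Sum>j=0..n. \<Sum>i=0..n. f $ i * (c^i) $ j * h $ (n - j))"
  proof (rule sum.cong[OF refl])
    fix j assume j: "j \<in> {0..n}"
    have "(\<Sum>i=0..n. f $ i * (c^i) $ j * h $ (n - j)) = (\<Sum>i=0..j. f $ i * (c^i) $ j * h $ (n - j))"
      using j by (intro sum.mono_neutral_right) (auto simp: z)
    then show "(\<Sum>i=0..j. f $ i * (c^i) $ j) * h $ (n - j) = (\<Sum>i=0..n. f $ i * (c^i) $ j * h $ (n - j))"
      by (simp add: sum_distrib_right)
  qed
  also have "\<dots> = (\<Sum>i=0..n. \<Sum>j=0..n. f $ i * (c^i) $ j * h $ (n - j))"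
    by (rule sum.swap)
  also have "\<dots> = (\<Sum>i=0..n. f $ i * (c^i * h) $ n)"
    by (simp add: fps_mult_nth sum_distrib_left mult.assoc)
  finally show ?thesis .
qed

lemma Wpow: "(W ^ Suc k) $ m = real ((k + m) choose m)"
proof (induction k arbitrary: m)
  case 0
  then show ?case by (simp add: W_def)
next
  case (Suc k)
  have "(W ^ Suc (Suc k)) $ m = (W ^ Suc k * W) $ m" by (simp add: mult.commute)
  also have "\<dots> = (\<Sum>i=0..m. (W ^ Suc k) $ i * W $ (m - i))" by (rule fps_mult_nth)
  also have "\<dots> = (\<Sum>i=0..m. real ((k + i) choose i))"
    unfolding Suc.IH by (simp add: W_def)
  also have "\<dots> = real (Suc (k + m) choose m)"
    using sum_choose_lower[of k m] by (simp add: atLeast0AtMost flip: of_nat_sum)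
  finally show ?case by simp
qed

lemma Vpow_W_nth:
  "(V ^ i * W) $ m = (-4) ^ i * (if m < 3 * i then 0 else real ((m - 2 * i) choose i))"
proof -
  have "V ^ i = fps_const ((-4) ^ i) * (fps_X ^ 3) ^ i * W ^ i"
    unfolding V_def by (simp add: power_mult_distrib fps_const_power)
  also have "(fps_X ^ 3) ^ i = (fps_X :: real fps) ^ (3 * i)" by (simp add: power_mult)
  finally have vi: "V ^ i = fps_const ((-4) ^ i) * fps_X ^ (3 * i) * W ^ i" .
  have vw: "V ^ i * W = fps_const ((-4) ^ i) * (fps_X ^ (3 * i) * W ^ Suc i)"
    unfolding vi by (simp only: power_Suc2 mult.assoc)
  have "(V ^ i * W) $ m = (-4) ^ i * (fps_X ^ (3 * i) * W ^ Suc i) $ m"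
    unfolding vw by (rule fps_mult_left_const_nth)
  also have "\<dots> = (-4) ^ i * (if m < 3 * i then 0 else real ((i + (m - 3 * i)) choose (m - 3 * i)))"
    by (simp only: fps_X_power_mult_nth Wpow)
  also have "\<dots> = (-4) ^ i * (if m < 3 * i then 0 else real ((m - 2 * i) choose i))"
  proof (cases "m < 3 * i")
    case False
    have "i + (m - 3 * i) = m - 2 * i" using False by simp
    moreover have "(m - 2 * i) choose (m - 3 * i) = (m - 2 * i) choose i"
      using binomial_symmetric[of i "m - 2 * i"] False by (simp add: diff_diff_left)
    ultimately show ?thesis using False by simp
  qed simp
  finally show ?thesis .
qed

lemma Bh_nth: "Bh $ n = (-1/2) gchoose n" by (simp add: Bh_def)

lemma central_Bh: "Bh $ i * (-4) ^ i = real ((2 * i) choose i)"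
proof (induction i)
  case 0
  then show ?case by (simp add: Bh_def)
next
  case (Suc i)
  have b1: "real (Suc i) * real ((2 * Suc i) choose Suc i) = 2 * real (2 * i + 1) * real ((2 * i) choose i)"
  proof -
    have e1: "real (Suc (Suc (2 * i))) * real (Suc (2 * i) choose i) = real (Suc (Suc (2 * i)) choose Suc i) * real (Suc i)"
      using arg_cong[OF Suc_times_binomial_eq[of "Suc (2 * i)" i], of real] by (simp only: of_nat_mult)
    have e2: "real (Suc (2 * i)) * real ((2 * i) choose i) = real (Suc (2 * i) choose Suc i) * real (Suc i)"
      using arg_cong[OF Suc_times_binomial_eq[of "2 * i" i], of real] by (simp only: of_nat_mult)
    have sy: "Suc (2 * i) choose i = Suc (2 * i) choose Suc i"
      using binomial_symmetric[of i "Suc (2 * i)"] by simp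
    have zz: "Suc (Suc (2 * i)) = 2 * Suc i" by simp
    define x where "x = real ((2 * i) choose i)"
    define y where "y = real (Suc (2 * i) choose Suc i)"
    define z where "z = real ((2 * Suc i) choose Suc i)"
    have e1': "real (2 * Suc i) * y = z * real (Suc i)" using e1 unfolding y_def z_def sy zz .
    have e2': "real (Suc (2 * i)) * x = y * real (Suc i)" using e2 unfolding y_def x_def .
    have "z * real (Suc i) = (2 * y) * real (Suc i)"
      using e1' by (simp only: of_nat_mult) (simp add: algebra_simps)
    then have e3: "z = 2 * y" by (metis mult_right_cancel of_nat_Suc of_nat_eq_0_iff nat.simps(3))
    have "real (Suc i) * z = 2 * real (2 * i + 1) * x"
      using e2' unfolding e3 by (simp add: algebra_simps)
    then show ?thesis unfolding x_def z_def .
  qed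
  have "Bh $ Suc i * (-4) ^ Suc i = (Bh $ i * (-4) ^ i) * (-4) * (-1/2 - real i) / real (Suc i)"
    by (simp add: Bh_nth gch_Suc field_simps del: of_nat_Suc)
  also have "\<dots> = real ((2 * i) choose i) * (2 * real (2 * i + 1)) / real (Suc i)"
    using Suc.IH by (simp add: field_simps)
  also have "\<dots> = real ((2 * Suc i) choose Suc i)"
    using b1 by (simp add: field_simps del: of_nat_Suc)
  finally show ?case .
qed

lemma Ed_nth: "Ed $ n = real (ce n)"
proof -
  have "Ed $ n = (\<Sum>i=0..n. Bh $ i * (V ^ i * W) $ n)"
    unfolding Ed_def by (rule compose_mult_nth[OF V_0])
  also have "\<dots> = (\<Sum>i=0..n. real (cterm n i))"
  proof (rule sum.cong[OF refl])
    fix i assume "i \<in> {0..n}"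
    show "Bh $ i * (V ^ i * W) $ n = real (cterm n i)"
    proof (cases "n < 3 * i")
      case True
      then have "n - 2 * i < i" by auto
      then have "cterm n i = 0" by (simp add: cterm_def)
      then show ?thesis using True by (simp add: Vpow_W_nth)
    next
      case False
      have "Bh $ i * (V ^ i * W) $ n = (Bh $ i * (-4) ^ i) * real ((n - 2 * i) choose i)"
        using False by (simp add: Vpow_W_nth)
      then show ?thesis by (simp add: central_Bh cterm_def)
    qed
  qed
  finally show ?thesis by (simp add: ce_def atLeast0AtMost)
qed



definition beta :: "nat \<Rightarrow> real" where "beta k = \<bar>(1/2::real) gchoose k\<bar>"

lemma beta_Suc: "beta (Suc k) = beta k * \<bar>1/2 - real k\<bar> / real (Suc k)"
  unfolding beta_def gch_Suc by (simp add: abs_mult del: of_nat_Suc)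

lemma beta_sq: "beta k ^ 2 \<le> 4 / (real k + 1) ^ 3"
proof (induction k)
  case 0
  then show ?case by (simp add: beta_def)
next
  case (Suc k)
  show ?case
  proof (cases "k = 0")
    case True
    then show ?thesis by (simp add: beta_def power2_eq_square)
  next
    case False
    then have k1: "real k \<ge> 1" by simp
    have "beta (Suc k) ^ 2 = beta k ^ 2 * (real k - 1/2) ^ 2 / (real k + 1) ^ 2"
      using k1 by (simp add: beta_Suc power_divide power_mult_distrib abs_if)
    also have "\<dots> \<le> 4 / (real k + 1) ^ 3 * (real k - 1/2) ^ 2 / (real k + 1) ^ 2"
      by (intro divide_right_mono mult_right_mono Suc.IH) auto
    also have "\<dots> \<le> 4 / (real (Suc k) + 1) ^ 3"
    proof -
      have poly: "(2 * real k - 1) ^ 2 * (real k + 2) ^ 3 \<le> 4 * (real k + 1) ^ 5"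
      proof -
        have "4 * (real k + 1) ^ 5 - (2 * real k - 1) ^ 2 * (real k + 2) ^ 3 = -4 + 40 * real k + 50 * real k ^ 2 + 15 * real k ^ 3"
          by (simp add: algebra_simps power2_eq_square power3_eq_cube power_numeral_reduce)
        moreover have "-4 + 40 * real k + 50 * real k ^ 2 + 15 * real k ^ 3 \<ge> 0"
          using k1 by (simp add: add_nonneg_nonneg)
        ultimately show ?thesis by linarith
      qed
      have "4 / (real k + 1) ^ 3 * (real k - 1/2) ^ 2 / (real k + 1) ^ 2
          = (2 * real k - 1) ^ 2 / (real k + 1) ^ 5"
      proof -
        have "(real k - 1/2) ^ 2 * 4 = (2 * real k - 1) ^ 2" by (simp add: power2_eq_square algebra_simps)
        moreover have "(real k + 1) ^ 3 * (real k + 1) ^ 2 = (real k + 1) ^ 5" by (simp flip: power_add)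
        moreover have "4 / (real k + 1) ^ 3 * (real k - 1/2) ^ 2 / (real k + 1) ^ 2
            = (real k - 1/2) ^ 2 * 4 / ((real k + 1) ^ 3 * (real k + 1) ^ 2)" by simp
        ultimately show ?thesis by simp
      qed
      also have "\<dots> \<le> 4 / (real k + 2) ^ 3"
        using poly by (simp add: field_simps)
      finally show ?thesis by (simp add: add.commute)
    qed
    finally show ?thesis .
  qed
qed

lemma beta_bound: "beta k \<le> 2 / ((real k + 1) * sqrt (real k + 1))"
proof -
  have b0: "beta k \<ge> 0" by (simp add: beta_def)
  have "beta k = sqrt (beta k ^ 2)" using b0 by simp
  also have "\<dots> \<le> sqrt (4 / (real k + 1) ^ 3)" by (rule real_sqrt_le_mono[OF beta_sq])
  also have "sqrt (4 / (real k + 1) ^ 3) = 2 / ((real k + 1) * sqrt (real k + 1))"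
  proof -
    have "(real k + 1) ^ 3 = ((real k + 1) * sqrt (real k + 1)) ^ 2"
      by (simp add: power2_eq_square power3_eq_cube power_mult_distrib)
    then have "sqrt (4 / (real k + 1) ^ 3) = sqrt ((2 / ((real k + 1) * sqrt (real k + 1))) ^ 2)"
      by (simp add: power_divide)
    also have "\<dots> = 2 / ((real k + 1) * sqrt (real k + 1))" by simp
    finally show ?thesis .
  qed
  finally show ?thesis .
qed

lemma abs_Bh: "\<bar>Bh $ i\<bar> \<le> 1"
proof (induction i)
  case 0
  then show ?case by (simp add: Bh_def)
next
  case (Suc i)
  have "\<bar>Bh $ Suc i\<bar> = \<bar>Bh $ i\<bar> * ((real i + 1/2) / (real i + 1))"
    by (simp add: Bh_nth gch_Suc abs_mult abs_divide)
  also have "\<dots> \<le> 1 * 1"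
    using Suc.IH by (intro mult_mono) auto
  finally show ?case by simp
qed

lemma X2_comp_1: "(1 + fps_X) oo X2 = 1 + X2"
  using X2_0 by (simp add: fps_compose_add_distrib)

lemma pow_X2_nth: "((1 + X2) ^ m) $ l = (-2) ^ l * real (m choose l)"
proof -
  have "(1 + X2) ^ m = fps_binomial (of_nat m) oo X2"
    by (simp add: fps_binomial_of_nat fps_compose_power[OF X2_0, symmetric] X2_comp_1)
  also have "\<dots> $ l = (-2) ^ l * real (m choose l)"
    unfolding X2_def fps_compose_linear by (simp add: binomial_gbinomial)
  finally show ?thesis .
qed

definition H :: "real fps" where "H = (1 + X2) * A"

lemma H_nth: "H $ k = (-2) ^ k * ((1/2) gchoose k)"
proof -
  have "H = (fps_binomial 1 * Bh) oo X2"
    unfolding H_def A_def using X2_0 by (simp add: fps_compose_mult_distrib fps_binomial_1 X2_comp_1)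
  also have "fps_binomial 1 * Bh = fps_binomial (1/2)"
    unfolding Bh_def by (simp flip: fps_binomial_add_mult)
  finally have "H = fps_binomial (1/2) oo X2" .
  then have "H $ k = (fps_binomial (1/2) oo X2) $ k" by (rule arg_cong)
  then show ?thesis by (simp add: X2_def fps_compose_linear)
qed

lemma A_nth: "A $ n = (-2) ^ n * Bh $ n"
  unfolding A_def X2_def fps_compose_linear by simp

lemma U_eq: "U = fps_X ^ 2 * (1 + X2)"
  unfolding U_def X2_def by (simp add: algebra_simps power2_eq_square power3_eq_cube flip: fps_const_neg)

lemma UiA_nth:
  assumes "i \<ge> 1"
  shows "(U ^ i * A) $ n = (if n < 2 * i then 0 else
           (\<Sum>l=0..n - 2 * i. (-2) ^ l * real ((i - 1) choose l) * ((-2) ^ (n - 2 * i - l) * ((1/2) gchoose (n - 2 * i - l)))))"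
proof -
  obtain j where j: "i = Suc j" using assms by (cases i) auto
  have ui: "U ^ i = fps_X ^ (2 * i) * (1 + X2) ^ i"
    unfolding U_eq by (simp add: power_mult_distrib power_mult)
  have pj: "(1 + X2) ^ i = (1 + X2) ^ (i - 1) * (1 + X2)" by (simp add: j power_Suc2)
  have "U ^ i * A = fps_X ^ (2 * i) * ((1 + X2) ^ (i - 1) * H)"
    unfolding ui pj H_def by (simp only: mult.assoc)
  then have e: "(U ^ i * A) $ n = (if n < 2 * i then 0 else ((1 + X2) ^ (i - 1) * H) $ (n - 2 * i))"
    by (simp only: fps_X_power_mult_nth)
  have m: "((1 + X2) ^ (i - 1) * H) $ (n - 2 * i) = (\<Sum>l=0..n - 2 * i. ((1 + X2) ^ (i - 1)) $ l * H $ (n - 2 * i - l))"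
    by (rule fps_mult_nth)
  show ?thesis unfolding e m pow_X2_nth H_nth ..
qed

lemma T_nth_diff: "T $ n - A $ n = (\<Sum>i=1..n. Bh $ i * (U ^ i * A) $ n)"
proof -
  have "T $ n = ((Bh oo U) * A) $ n" unfolding T_def G_def by (simp add: mult.commute)
  also have "\<dots> = (\<Sum>i=0..n. Bh $ i * (U ^ i * A) $ n)" by (rule compose_mult_nth[OF U_0])
  also have "\<dots> = Bh $ 0 * (U ^ 0 * A) $ n + (\<Sum>i=1..n. Bh $ i * (U ^ i * A) $ n)"
    by (simp add: sum.atLeast_Suc_atMost)
  finally show ?thesis by (simp add: Bh_def)
qed

lemma sq_aux:
  fixes x y z :: real
  assumes x: "x \<ge> 1" and y: "y \<ge> 1" and z: "z > 0" and zxy: "z \<le> x * y"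
  shows "2 / (x * sqrt x) \<le> 2 * y ^ 2 / (z * sqrt z)"
proof -
  have "z * sqrt z \<le> (x * y) * sqrt (x * y)"
    using z zxy by (intro mult_mono real_sqrt_le_mono) auto
  also have "\<dots> = (x * sqrt x) * (y * sqrt y)" by (simp add: real_sqrt_mult algebra_simps)
  also have "\<dots> \<le> (x * sqrt x) * y ^ 2"
  proof -
    have s1: "sqrt y \<ge> 1" using y by simp
    have "sqrt y * 1 \<le> sqrt y * sqrt y" using s1 by (intro mult_left_mono) auto
    then have "sqrt y \<le> y" using y by simp
    then have "y * sqrt y \<le> y * y" using y by (intro mult_left_mono) auto
    then show ?thesis using x by (intro mult_left_mono) (auto simp: power2_eq_square)
  qed
  finally have le: "z * sqrt z \<le> (x * sqrt x) * y ^ 2" .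
  have pos: "x * sqrt x > 0" "z * sqrt z > 0" using x z by auto
  show ?thesis using le pos by (simp add: field_simps)
qed

lemma choose_partial_sum: "(\<Sum>l=0..M. real (k choose l)) \<le> 2 ^ k"
proof -
  have "(\<Sum>l=0..M. real (k choose l)) \<le> (\<Sum>l=0..max M k. real (k choose l))"
    by (intro sum_mono2) auto
  also have "\<dots> = (\<Sum>l\<le>k. real (k choose l))"
    by (intro sum.mono_neutral_right) auto
  also have "\<dots> = 2 ^ k" using choose_row_sum[of k] by (simp flip: of_nat_sum)
  finally show ?thesis .
qed

lemma term_bound:
  assumes i1: "i \<ge> 1"
  shows "\<bar>(U ^ i * A) $ n\<bar> / 2 ^ n \<le> (3 * real i + 1) ^ 2 / 2 ^ i / ((real n + 1) * sqrt (real n + 1))"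
proof (cases "n < 2 * i")
  case True
  then show ?thesis using i1 by (simp add: UiA_nth)
next
  case False
  define m where "m = n - 2 * i"
  define Bd where "Bd = 2 * (3 * real i + 1) ^ 2 / ((real n + 1) * sqrt (real n + 1))"
  have Bd0: "Bd \<ge> 0" by (simp add: Bd_def)
  have tb: "real ((i - 1) choose l) * beta (m - l) \<le> real ((i - 1) choose l) * Bd" if l: "l \<in> {0..m}" for l
  proof (cases "l \<le> i - 1")
    case True
    define k where "k = m - l"
    have "real k + 1 \<ge> 1" by simp
    have kn: "real n + 1 \<le> (real k + 1) * (3 * real i + 1)"
    proof -
      have "n + 1 \<le> (k + 1) * (3 * i + 1)"
      proof -
        have "(k + 1) * (3 * i + 1) = (k + 1) + 3 * i * (k + 1)" by (simp add: algebra_simps)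
        moreover have "3 * i * (k + 1) \<ge> 3 * i" by simp
        moreover have "n + 1 \<le> (k + 1) + 3 * i"
        proof -
          have lm: "l \<le> m" using l by simp
          have km: "k + l = m" using lm by (simp add: k_def)
          have mn: "m + 2 * i = n" using False by (simp add: m_def)
          have li: "l + 1 \<le> i" using True i1 by simp
          show ?thesis using km mn li by linarith
        qed
        ultimately show ?thesis by linarith
      qed
      then have "real (n + 1) \<le> real ((k + 1) * (3 * i + 1))" by (simp only: of_nat_le_iff)
      then show ?thesis by (simp add: algebra_simps)
    qed
    have "beta k \<le> 2 / ((real k + 1) * sqrt (real k + 1))" by (rule beta_bound)
    also have "\<dots> \<le> Bd" unfolding Bd_def
      by (rule sq_aux) (use kn in auto)
    finally have "beta (m - l) \<le> Bd" by (simp add: k_def)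
    then show ?thesis by (intro mult_left_mono) auto
  next
    case False
    then have "(i - 1) choose l = 0" by (intro binomial_eq_0) simp
    then have z: "real ((i - 1) choose l) = 0" by (simp only: of_nat_0)
    show ?thesis unfolding z by simp
  qed
  have "\<bar>(U ^ i * A) $ n\<bar> = \<bar>\<Sum>l=0..m. (-2) ^ l * real ((i - 1) choose l) * ((-2) ^ (m - l) * ((1/2) gchoose (m - l)))\<bar>"
    unfolding UiA_nth[OF i1] m_def if_not_P[OF False] ..
  also have "\<dots> \<le> (\<Sum>l=0..m. \<bar>(-2) ^ l * real ((i - 1) choose l) * ((-2) ^ (m - l) * ((1/2) gchoose (m - l)))\<bar>)"
    by (rule sum_abs)
  also have "\<dots> = (\<Sum>l=0..m. 2 ^ m * (real ((i - 1) choose l) * beta (m - l)))"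
  proof (rule sum.cong[OF refl])
    fix l assume l: "l \<in> {0..m}"
    have "(2::real) ^ l * 2 ^ (m - l) = 2 ^ m" using l by (simp flip: power_add)
    then show "\<bar>(-2) ^ l * real ((i - 1) choose l) * ((-2) ^ (m - l) * ((1/2) gchoose (m - l)))\<bar>
        = 2 ^ m * (real ((i - 1) choose l) * beta (m - l))"
    proof -
      have "\<bar>(-2) ^ l * real ((i - 1) choose l) * ((-2) ^ (m - l) * ((1/2) gchoose (m - l)))\<bar>
          = ((2::real) ^ l * 2 ^ (m - l)) * (real ((i - 1) choose l) * beta (m - l))"
        by (simp add: abs_mult power_abs beta_def mult_ac)
      then show ?thesis using \<open>(2::real) ^ l * 2 ^ (m - l) = 2 ^ m\<close> by simp
    qed
  qed
  also have "\<dots> \<le> (\<Sum>l=0..m. 2 ^ m * (real ((i - 1) choose l) * Bd))"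
    by (intro sum_mono mult_left_mono tb) auto
  also have "\<dots> = 2 ^ m * Bd * (\<Sum>l=0..m. real ((i - 1) choose l))"
    by (simp only: sum_distrib_left) (simp add: mult_ac)
  also have "\<dots> \<le> 2 ^ m * Bd * 2 ^ (i - 1)"
    using Bd0 by (intro mult_left_mono choose_partial_sum) auto
  finally have le: "\<bar>(U ^ i * A) $ n\<bar> \<le> 2 ^ m * Bd * 2 ^ (i - 1)" .
  have p: "(2::real) ^ n = 2 ^ m * 2 ^ (i - 1) * 2 ^ i * 2"
  proof -
    have "n = m + (i - 1) + i + 1" using False i1 by (simp add: m_def)
    then have "(2::real) ^ n = 2 ^ (m + (i - 1) + i + 1)" by (simp only:)
    then show ?thesis by (simp only: power_add power_one_right)
  qed
  have "\<bar>(U ^ i * A) $ n\<bar> / 2 ^ n \<le> 2 ^ m * Bd * 2 ^ (i - 1) / 2 ^ n"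
    using le by (intro divide_right_mono) auto
  also have "\<dots> = Bd / (2 ^ i * 2)" unfolding p by (simp add: field_simps)
  also have "\<dots> = (3 * real i + 1) ^ 2 / 2 ^ i / ((real n + 1) * sqrt (real n + 1))"
  proof -
    have gen: "2 * q / d / (t * 2) = q / t / d" for q d t :: real by (simp add: divide_divide_eq_left mult_ac)
    show ?thesis unfolding Bd_def by (rule gen)
  qed
  finally show ?thesis .
qed


lemma geo_sum: "(\<Sum>i<N. (3 * real i + 1) ^ 2 / 2 ^ i) = 68 - (18 * real N ^ 2 + 48 * real N + 68) / 2 ^ N"
proof (induction N)
  case 0
  then show ?case by simp
next
  case (Suc N)
  define t :: real where "t = 2 ^ N"
  have t0: "t > 0" by (simp add: t_def)
  have q: "18 * real (Suc N) ^ 2 + 48 * real (Suc N) + 68 = 2 * (18 * real N ^ 2 + 48 * real N + 68) - 2 * (3 * real N + 1) ^ 2"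
    by (simp add: power2_eq_square algebra_simps)
  have gen: "68 - a / t + b / t = 68 - (2 * a - 2 * b) / (2 * t)" for a b using t0 by (simp add: field_simps)
  have "(\<Sum>i<Suc N. (3 * real i + 1) ^ 2 / 2 ^ i) = (\<Sum>i<N. (3 * real i + 1) ^ 2 / 2 ^ i) + (3 * real N + 1) ^ 2 / t"
    by (simp add: t_def)
  also have "\<dots> = 68 - (18 * real N ^ 2 + 48 * real N + 68) / t + (3 * real N + 1) ^ 2 / t"
    unfolding Suc.IH t_def ..
  also have "\<dots> = 68 - (18 * real (Suc N) ^ 2 + 48 * real (Suc N) + 68) / (2 * t)"
    unfolding gen q ..
  finally show ?case by (simp add: t_def)
qed

lemma main_bound: "\<bar>T $ n / 2 ^ n - A $ n / 2 ^ n\<bar> \<le> 68 / ((real n + 1) * sqrt (real n + 1))"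
proof -
  define D where "D = (real n + 1) * sqrt (real n + 1)"
  have D0: "D > 0" by (simp add: D_def add_pos_nonneg)
  have "\<bar>T $ n / 2 ^ n - A $ n / 2 ^ n\<bar> = \<bar>T $ n - A $ n\<bar> / 2 ^ n"
    by (simp add: diff_divide_distrib[symmetric] abs_divide)
  also have "\<dots> = \<bar>\<Sum>i=1..n. Bh $ i * (U ^ i * A) $ n\<bar> / 2 ^ n" by (simp add: T_nth_diff)
  also have "\<dots> \<le> (\<Sum>i=1..n. \<bar>(U ^ i * A) $ n\<bar>) / 2 ^ n"
  proof (rule divide_right_mono)
    have "\<bar>\<Sum>i=1..n. Bh $ i * (U ^ i * A) $ n\<bar> \<le> (\<Sum>i=1..n. \<bar>Bh $ i * (U ^ i * A) $ n\<bar>)"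
      by (rule sum_abs)
    also have "\<dots> \<le> (\<Sum>i=1..n. \<bar>(U ^ i * A) $ n\<bar>)"
      by (intro sum_mono) (auto simp: abs_mult intro: mult_left_le_one_le abs_Bh)
    finally show "\<bar>\<Sum>i=1..n. Bh $ i * (U ^ i * A) $ n\<bar> \<le> (\<Sum>i=1..n. \<bar>(U ^ i * A) $ n\<bar>)" .
  qed simp
  also have "\<dots> = (\<Sum>i=1..n. \<bar>(U ^ i * A) $ n\<bar> / 2 ^ n)" by (simp add: sum_divide_distrib)
  also have "\<dots> \<le> (\<Sum>i=1..n. (3 * real i + 1) ^ 2 / 2 ^ i / D)"
    unfolding D_def by (intro sum_mono term_bound) auto
  also have "\<dots> = (\<Sum>i=1..n. (3 * real i + 1) ^ 2 / 2 ^ i) / D" by (simp add: sum_divide_distrib)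
  also have "\<dots> \<le> 68 / D"
  proof (rule divide_right_mono)
    have "(\<Sum>i=1..n. (3 * real i + 1) ^ 2 / 2 ^ i) \<le> (\<Sum>i<Suc n. (3 * real i + 1) ^ 2 / 2 ^ i)"
      by (intro sum_mono2) auto
    also have "\<dots> \<le> 68" unfolding geo_sum by (simp add: add_nonneg_nonneg)
    finally show "(\<Sum>i=1..n. (3 * real i + 1) ^ 2 / 2 ^ i) \<le> 68" .
  qed (use D0 in auto)
  finally show ?thesis unfolding D_def .
qed



lemma card_filter_sum: "finite S \<Longrightarrow> real (card {x \<in> S. Q x}) = (\<Sum>x\<in>S. if Q x then 1 else 0)"
proof -
  assume f: "finite S"
  have "real (card {x \<in> S. Q x}) = (\<Sum>x\<in>{x \<in> S. Q x}. 1)" by simp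
  also have "\<dots> = (\<Sum>x\<in>S. if Q x then 1 else 0)" using f by (rule sum.inter_filter)
  finally show ?thesis .
qed

lemma Delta_Dz: "Delta n = real_of_int (Dz n) / 2 ^ n"
proof -
  have "real (card {xs \<in> coin_seqs n. bob_score xs > alice_score xs})
      - real (card {xs \<in> coin_seqs n. alice_score xs > bob_score xs})
      = (\<Sum>xs\<in>coin_seqs n. (if bob_score xs > alice_score xs then 1 else 0) - (if alice_score xs > bob_score xs then 1 else 0))"
    by (simp add: card_filter_sum[OF finite_coin] sum_subtractf)
  also have "\<dots> = real_of_int (Dz n)"
    unfolding Dz_def of_int_sum by (intro sum.cong) (auto simp: sgn_if)
  finally show ?thesis unfolding Delta_def by simp
qed

lemma dseq_T: "dseq n = T $ n / 2"
proof -
  have "2 * real_of_int (Dz n) + 1 = real (ce n)" using arg_cong[OF Dz_ce[of n], of real_of_int] by simp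
  then have "real_of_int (Dz n) + 1/2 = Ed $ n / 2" unfolding Ed_nth by simp
  then show ?thesis unfolding dseq_def Delta_Dz Ed_eq_T by simp
qed

definition an :: "nat \<Rightarrow> real" where "an n = (-1) ^ n * Bh $ n"

lemma an_0: "an 0 = 1" by (simp add: an_def Bh_def)
lemma an_Suc: "an (Suc n) = an n * (2 * real n + 1) / (2 * real n + 2)"
  by (simp add: an_def Bh_nth gch_Suc field_simps)
lemma an_pos: "an n > 0"
  by (induction n) (simp_all add: an_0 an_Suc)

lemma A_an: "A $ n / 2 ^ n = an n"
proof -
  have "(-2::real) ^ n = (-1) ^ n * 2 ^ n" by (simp flip: power_mult_distrib)
  then show ?thesis by (simp add: A_nth an_def)
qed

lemma Gamma_an: "Gamma (real n + 1 / 2) / Gamma (real n + 1) = sqrt pi * an n"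
proof (induction n)
  case 0
  then show ?case by (simp add: an_0 Gamma_one_half_real)
next
  case (Suc n)
  have g1: "Gamma (real (Suc n) + 1 / 2) = (real n + 1/2) * Gamma (real n + 1 / 2)"
  proof -
    have "real n + 1/2 \<notin> \<int>\<^sub>\<le>\<^sub>0" by (auto dest: nonpos_Ints_nonpos)
    then have "Gamma (real n + 1/2 + 1) = (real n + 1/2) * Gamma (real n + 1 / 2)" by (rule Gamma_plus1)
    then show ?thesis by (simp add: add_ac)
  qed
  have g2: "Gamma (real (Suc n) + 1) = (real n + 1) * Gamma (real n + 1)"
  proof -
    have "real n + 1 \<notin> \<int>\<^sub>\<le>\<^sub>0" by (auto dest: nonpos_Ints_nonpos)
    then have "Gamma (real n + 1 + 1) = (real n + 1) * Gamma (real n + 1)" by (rule Gamma_plus1)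
    then show ?thesis by (simp add: add_ac)
  qed
  have gp: "Gamma (real n + 1) > 0" by (intro Gamma_real_pos) auto
  have "Gamma (real (Suc n) + 1 / 2) / Gamma (real (Suc n) + 1)
      = (Gamma (real n + 1 / 2) / Gamma (real n + 1)) * ((real n + 1/2) / (real n + 1))"
  proof -
    have gen: "(x * a) / (y * b) = (a / b) * (x / y)" for x a y b :: real
      by (simp add: times_divide_times_eq mult.commute)
    show ?thesis unfolding g1 g2 by (rule gen)
  qed
  also have "\<dots> = sqrt pi * an (Suc n)"
  proof -
    have r: "(real n + 1/2) / (real n + 1) = (2 * real n + 1) / (2 * real n + 2)"
      by (simp add: divide_simps)
    show ?thesis unfolding Suc.IH an_Suc r by (simp add: mult.assoc)
  qed
  finally show ?case .
qed

lemma powr_32: "n \<ge> 1 \<Longrightarrow> real n powr (-3/2) = 1 / (real n * sqrt (real n))"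
proof -
  assume n: "n \<ge> 1"
  have a: "real n powr (3/2) = real n powr (1 + 1/2)"
    by (rule arg_cong[where f="\<lambda>x. real n powr x"]) simp
  have b: "real n powr (1 + 1/2) = real n powr 1 * real n powr (1/2)" by (rule powr_add)
  have c: "real n powr 1 = real n" using n by simp
  have d: "real n powr (1/2) = sqrt (real n)" by (rule powr_half_sqrt) simp
  have e: "real n powr (-3/2) = real n powr (- (3/2))"
    by (rule arg_cong[where f="\<lambda>x. real n powr x"]) simp
  have f: "real n powr (- (3/2)) = inverse (real n powr (3/2))" by (rule powr_minus)
  show ?thesis unfolding e f a b c d by (simp add: divide_inverse)
qed

lemma first_bound:
  assumes n: "n \<ge> 1"
  shows "\<bar>dseq n / 2 ^ n - 1 / (2 * sqrt pi) * (Gamma (real n + 1 / 2) / Gamma (real n + 1))\<bar>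
         \<le> 34 * real n powr (-3/2)"
proof -
  have e: "dseq n / 2 ^ n - 1 / (2 * sqrt pi) * (Gamma (real n + 1 / 2) / Gamma (real n + 1))
      = (T $ n / 2 ^ n - A $ n / 2 ^ n) / 2"
    unfolding dseq_T Gamma_an A_an by (simp add: field_simps)
  have "\<bar>(T $ n / 2 ^ n - A $ n / 2 ^ n) / 2\<bar> \<le> 34 / ((real n + 1) * sqrt (real n + 1))"
    using main_bound[of n] by simp
  also have "\<dots> \<le> 34 / (real n * sqrt (real n))"
    using n by (intro divide_left_mono mult_mono) auto
  finally show ?thesis unfolding e powr_32[OF n] by simp
qed


lemma inv_bound1:
  fixes b c p :: real
  assumes "c > 0" "b > 0" "p > 0" "1 / (c * b) \<le> p / 2"
  shows "2 / (p * c) \<le> b"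
proof -
  have "2 \<le> p * (c * b)" using assms by (simp add: field_simps)
  then show ?thesis using assms by (simp add: field_simps)
qed

lemma inv_bound2:
  fixes b c p :: real
  assumes "c > 0" "b > 0" "p > 0" "p / 2 \<le> 1 / (c * b)"
  shows "b \<le> 2 / (p * c)"
proof -
  have "p * (c * b) \<le> 2" using assms by (simp add: field_simps)
  then show ?thesis using assms by (simp add: field_simps)
qed

definition pw :: "nat \<Rightarrow> real" where "pw n = (\<Prod>k=1..n. (4*real k^2) / (4*real k^2 - 1))"

lemma pw_Suc: "pw (Suc n) = pw n * ((4*real (Suc n)^2) / (4*real (Suc n)^2 - 1))"
  unfolding pw_def by (simp add: prod.nat_ivl_Suc' mult.commute del: of_nat_Suc)

lemma pw_eq: "pw n = 1 / ((2 * real n + 1) * an n ^ 2)"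
proof (induction n)
  case 0
  then show ?case by (simp add: pw_def an_0)
next
  case (Suc n)
  define a where "a = an n"
  define x where "x = real n"
  have a0: "a > 0" using an_pos by (simp add: a_def)
  have x0: "x \<ge> 0" by (simp add: x_def)
  have gen: "1 / ((2 * x + 1) * a ^ 2) * ((4 * (1 + x) ^ 2) / (4 * (1 + x) ^ 2 - 1))
      = 1 / ((2 * (1 + x) + 1) * (a * (2 * x + 1) / (2 * x + 2)) ^ 2)"
  proof -
    have f: "4 * (1 + x) ^ 2 - 1 = (2 * x + 1) * (2 * x + 3)" by (simp add: power2_eq_square algebra_simps)
    have g: "4 * (1 + x) ^ 2 = (2 * x + 2) ^ 2" by (simp add: power2_eq_square algebra_simps)
    have h: "2 * (1 + x) + 1 = 2 * x + 3" by simp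
    have gen2: "1 / (u * a ^ 2) * (w ^ 2 / (u * v)) = 1 / (v * (a * u / w) ^ 2)"
      if "u \<noteq> 0" "v \<noteq> 0" "w \<noteq> 0" "a \<noteq> 0" for u v w a :: real
      using that by (simp add: power_divide power_mult_distrib power2_eq_square)
    show ?thesis unfolding f unfolding g h using a0 x0 by (intro gen2) auto
  qed
  show ?case unfolding pw_Suc Suc.IH an_Suc of_nat_Suc
    using gen unfolding a_def x_def .
qed

lemma pw_inc: "incseq pw"
proof (rule incseq_SucI)
  fix n
  have p0: "pw n \<ge> 0" unfolding pw_eq using an_pos[of n] by simp
  have f1: "(4*real (Suc n)^2) / (4*real (Suc n)^2 - 1) \<ge> 1"
  proof -
    have "real (Suc n) \<ge> 1" by simp
    then have "real (Suc n)^2 \<ge> 1" by (rule one_le_power)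
    then have "4*real (Suc n)^2 - 1 > 0" by linarith
    then show ?thesis by (simp add: field_simps)
  qed
  have "pw n * 1 \<le> pw n * ((4*real (Suc n)^2) / (4*real (Suc n)^2 - 1))" by (rule mult_left_mono[OF f1 p0])
  then show "pw n \<le> pw (Suc n)" unfolding pw_Suc by simp
qed

lemma pw_lim: "pw \<longlonglongrightarrow> pi / 2"
  unfolding pw_def[abs_def] by (rule wallis)

lemma an_lower: "an n ^ 2 \<ge> 2 / (pi * (2 * real n + 1))"
proof -
  have "pw n \<le> pi / 2" by (rule incseq_le[OF pw_inc pw_lim])
  then have "1 / ((2 * real n + 1) * an n ^ 2) \<le> pi / 2" unfolding pw_eq .
  moreover have "an n ^ 2 > 0" using an_pos[of n] by simp
  ultimately show ?thesis using inv_bound1[of "2 * real n + 1" "an n ^ 2" pi] by simp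
qed

definition rr :: "nat \<Rightarrow> real" where "rr m = 1 / ((2 * real m + 2) * an (Suc m) ^ 2)"

lemma rr_eq: "rr m = pw (Suc m) * ((2 * real m + 3) / (2 * real m + 2))"
proof -
  have b0: "an (Suc m) ^ 2 > 0" using an_pos[of "Suc m"] by simp
  have gen: "1 / (c * b) = 1 / (d * b) * (d / c)" if "c > 0" "d > 0" "b > 0" for b c d :: real
    using that by (simp add: field_simps)
  have "2 * real (Suc m) + 1 = 2 * real m + 3" by simp
  then show ?thesis unfolding rr_def pw_eq using b0 by (simp only:) (rule gen, auto)
qed

lemma rr_lim: "rr \<longlonglongrightarrow> pi / 2"
proof -
  have l1: "(\<lambda>m. pw (Suc m)) \<longlonglongrightarrow> pi / 2" by (rule LIMSEQ_Suc[OF pw_lim])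
  have l2: "(\<lambda>m. (2 * real m + 3) / (2 * real m + 2)) \<longlonglongrightarrow> 1" by real_asymp
  have "(\<lambda>m. pw (Suc m) * ((2 * real m + 3) / (2 * real m + 2))) \<longlonglongrightarrow> pi / 2 * 1"
    by (rule tendsto_mult[OF l1 l2])
  then show ?thesis unfolding rr_eq[abs_def] by simp
qed

lemma rr_dec: "decseq rr"
proof (rule decseq_SucI)
  fix m
  define a where "a = an (Suc m)"
  define x where "x = real m"
  have a0: "a > 0" using an_pos by (simp add: a_def)
  have x0: "x \<ge> 0" by (simp add: x_def)
  have e: "rr (Suc m) = 1 / ((2 * x + 4) * (a * (2 * x + 3) / (2 * x + 4)) ^ 2)"
  proof -
    have r1: "2 * real (Suc m) + 2 = 2 * x + 4" by (simp add: x_def)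
    have r2: "2 * real (Suc m) + 1 = 2 * x + 3" by (simp add: x_def)
    show ?thesis unfolding rr_def an_Suc[of "Suc m"] r1 r2 a_def[symmetric] ..
  qed
  have "1 / ((2 * x + 4) * (a * (2 * x + 3) / (2 * x + 4)) ^ 2) \<le> 1 / ((2 * x + 2) * a ^ 2)"
  proof -
    have ine: "(2 * x + 4) * (2 * x + 2) \<le> (2 * x + 3) ^ 2" by (simp add: power2_eq_square algebra_simps)
    have gq: "p / q \<le> 1 / r" if "q > 0" "r > 0" "p * r \<le> q" for p q r :: real
      using that by (simp add: divide_simps)
    have q0: "(2 * x + 3) ^ 2 > 0" using x0 by simp
    have r0: "2 * x + 2 > 0" using x0 by simp
    have s1: "(2 * x + 4) / (2 * x + 3) ^ 2 \<le> 1 / (2 * x + 2)" by (rule gq[OF q0 r0 ine])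
    have s2: "(2 * x + 4) / (2 * x + 3) ^ 2 / a ^ 2 \<le> 1 / (2 * x + 2) / a ^ 2"
      using a0 by (intro divide_right_mono s1) simp
    have gen3: "1 / (u * (b * v / u) ^ 2) = u / v ^ 2 / b ^ 2" if "u \<noteq> 0" "v \<noteq> 0" "b \<noteq> 0" for u v b :: real
      using that by (simp add: power_divide power_mult_distrib power2_eq_square)
    have s3: "1 / ((2 * x + 4) * (a * (2 * x + 3) / (2 * x + 4)) ^ 2) = (2 * x + 4) / (2 * x + 3) ^ 2 / a ^ 2"
      using a0 x0 by (intro gen3) auto
    have s4: "1 / ((2 * x + 2) * a ^ 2) = 1 / (2 * x + 2) / a ^ 2" by (simp only: divide_divide_eq_left)
    show ?thesis unfolding s3 s4 by (rule s2)
  qed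
  also have "\<dots> = rr m" by (simp add: rr_def a_def x_def)
  finally show "rr (Suc m) \<le> rr m" unfolding e .
qed

lemma an_upper: "n \<ge> 1 \<Longrightarrow> an n ^ 2 \<le> 1 / (pi * real n)"
proof -
  assume n: "n \<ge> 1"
  then obtain m where m: "n = Suc m" by (cases n) auto
  have "pi / 2 \<le> rr m" by (rule decseq_ge[OF rr_dec rr_lim])
  then have "pi / 2 \<le> 1 / ((2 * real m + 2) * an n ^ 2)" unfolding rr_def m .
  moreover have "an n ^ 2 > 0" using an_pos[of n] by simp
  ultimately have "an n ^ 2 \<le> 2 / (pi * (2 * real m + 2))"
    using inv_bound2[of "2 * real m + 2" "an n ^ 2" pi] by simp
  also have "\<dots> = 1 / (pi * real n)"
  proof -
    have gy: "2 / (p * (2 * y + 2)) = 1 / (p * (y + 1))" for p y :: real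
      by (simp add: divide_simps)
    show ?thesis unfolding m gy by simp
  qed
  finally show ?thesis .
qed


lemma an_close:
  assumes n: "n \<ge> 1"
  shows "\<bar>an n - 1 / sqrt (pi * real n)\<bar> \<le> 1 / (real n * sqrt (real n))"
proof -
  define N where "N = real n"
  define a where "a = an n"
  define s where "s = 1 / sqrt (pi * N)"
  have N1: "N \<ge> 1" using n by (simp add: N_def)
  have pN: "pi * N > 0" using N1 pi_gt_zero by simp
  have s0: "s > 0" using pN by (simp add: s_def)
  have a0: "a > 0" using an_pos by (simp add: a_def)
  have hs2: "s ^ 2 = 1 / (pi * N)" using pN by (simp add: s_def power_divide)
  have up: "a ^ 2 \<le> s ^ 2" unfolding hs2 a_def N_def by (rule an_upper[OF n])
  have lo: "a ^ 2 \<ge> 2 / (pi * (2 * N + 1))" unfolding a_def N_def by (rule an_lower)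
  have as: "a \<le> s" using power2_le_imp_le[OF up] s0 by simp
  have idt: "1 / (p * M) - 2 / (p * (2 * M + 1)) = 1 / (p * M * (2 * M + 1))" if "p > 0" "M > 0" for p M :: real
  proof -
    have a: "1 / (p * M) = (2 * M + 1) / (p * M * (2 * M + 1))" using that by simp
    have b: "2 / (p * (2 * M + 1)) = (2 * M) / (p * M * (2 * M + 1))" using that by simp
    have "(2 * M + 1) / (p * M * (2 * M + 1)) - (2 * M) / (p * M * (2 * M + 1)) = ((2 * M + 1) - 2 * M) / (p * M * (2 * M + 1))"
      by (rule diff_divide_distrib[symmetric])
    then show ?thesis unfolding a b by simp
  qed
  have diff: "s ^ 2 - a ^ 2 \<le> 1 / (pi * N * (2 * N + 1))"
  proof -
    have "s ^ 2 - a ^ 2 \<le> 1 / (pi * N) - 2 / (pi * (2 * N + 1))" unfolding hs2 using lo by simp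
    also have "\<dots> = 1 / (pi * N * (2 * N + 1))" using N1 by (intro idt) auto
    finally show ?thesis .
  qed
  have key: "s - a \<le> (s ^ 2 - a ^ 2) / s"
  proof -
    have e: "s ^ 2 - a ^ 2 = (s - a) * (s + a)" by (simp add: power2_eq_square algebra_simps)
    have "(s - a) * s \<le> (s - a) * (s + a)" using as a0 by (intro mult_left_mono) auto
    then have "(s - a) * s \<le> s ^ 2 - a ^ 2" unfolding e .
    then show ?thesis using s0 by (simp add: le_divide_eq)
  qed
  have step: "(s ^ 2 - a ^ 2) / s \<le> (1 / (pi * N * (2 * N + 1))) / s"
    using diff s0 by (intro divide_right_mono) auto
  have fin: "(1 / (pi * N * (2 * N + 1))) / s \<le> 1 / (N * sqrt N)"
  proof -
    have sq: "sqrt (pi * N) = sqrt pi * sqrt N" by (simp add: real_sqrt_mult)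
    have pi_eq: "pi = sqrt pi * sqrt pi" by simp
    have N_eq: "N = sqrt N * sqrt N" using N1 by simp
    have spi: "sqrt pi \<ge> 1" using pi_gt3 by simp
    have sN: "sqrt N > 0" using N1 by simp
    have "(1 / (pi * N * (2 * N + 1))) / s = sqrt (pi * N) / (pi * N * (2 * N + 1))"
      by (simp add: s_def)
    also have "\<dots> = 1 / (sqrt pi * sqrt N * (2 * N + 1))"
    proof -
      have g: "(x * y) / ((x * x) * (y * y) * z) = 1 / (x * y * z)" if "x > 0" "y > 0" for x y z :: real
        using that by (simp add: field_simps)
      show ?thesis unfolding sq using g[of "sqrt pi" "sqrt N" "2 * N + 1"] sN pi_eq N_eq
        by (metis pi_gt_zero real_sqrt_gt_0_iff)
    qed
    also have "\<dots> \<le> 1 / (N * sqrt N)"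
    proof -
      have "1 * (2 * N + 1) \<le> sqrt pi * (2 * N + 1)" by (rule mult_right_mono[OF spi]) (use N1 in simp)
      then have h: "2 * N + 1 \<le> sqrt pi * (2 * N + 1)" by simp
      have "N \<le> 2 * N + 1" using N1 by simp
      then have "N \<le> sqrt pi * (2 * N + 1)" using h by (rule order_trans)
      then have "N * sqrt N \<le> sqrt pi * sqrt N * (2 * N + 1)"
        using sN by (metis mult.commute mult.left_commute mult_right_mono less_imp_le)
      moreover have "N * sqrt N > 0" using N1 sN by simp
      ultimately show ?thesis by (intro divide_left_mono) auto
    qed
    finally show ?thesis .
  qed
  have "\<bar>a - s\<bar> = s - a" using as by simp
  also have "\<dots> \<le> 1 / (N * sqrt N)" using key step fin by linarith
  finally show ?thesis by (simp add: a_def s_def N_def)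
qed


lemma norm_powr32: "\<bar>real n powr (-3/2)\<bar> = real n powr (-3/2)"
  by simp

theorem mainTheorem14:
  shows "(\<lambda>n. dseq n / 2 ^ n - 1 / (2 * sqrt pi) * (Gamma (real n + 1 / 2) / Gamma (real n + 1)))
           \<in> O(\<lambda>n. real n powr (-3/2)) \<and>
         (\<lambda>n. Delta n - 1 / (2 * sqrt (pi * real n))) \<in> O(\<lambda>n. real n powr (-3/2))"
proof -
  define f1 where "f1 = (\<lambda>n. dseq n / 2 ^ n - 1 / (2 * sqrt pi) * (Gamma (real n + 1 / 2) / Gamma (real n + 1)))"
  define g where "g = (\<lambda>n. (1/2) * (an n - 1 / sqrt (pi * real n)))"
  define h where "h = (\<lambda>n::nat. (1/2) / (2::real) ^ n)"
  have P1: "f1 \<in> O(\<lambda>n. real n powr (-3/2))"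
  proof (rule bigoI[where c = 34])
    show "\<forall>\<^sub>F n in at_top. norm (f1 n) \<le> 34 * norm (real n powr (-3/2))"
      using eventually_ge_at_top[of "1::nat"]
    proof eventually_elim
      case (elim n)
      show ?case unfolding f1_def real_norm_def norm_powr32 by (rule first_bound[OF elim])
    qed
  qed
  have P2: "g \<in> O(\<lambda>n. real n powr (-3/2))"
  proof (rule bigoI[where c = "1/2"])
    show "\<forall>\<^sub>F n in at_top. norm (g n) \<le> 1/2 * norm (real n powr (-3/2))"
      using eventually_ge_at_top[of "1::nat"]
    proof eventually_elim
      case (elim n)
      have "\<bar>g n\<bar> = 1/2 * \<bar>an n - 1 / sqrt (pi * real n)\<bar>" by (simp add: g_def abs_mult)
      also have "\<dots> \<le> 1/2 * (1 / (real n * sqrt (real n)))"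
        using an_close[OF elim] by simp
      also have "\<dots> = 1/2 * real n powr (-3/2)" using powr_32[OF elim] by simp
      finally show ?case unfolding real_norm_def norm_powr32 .
    qed
  qed
  have P3: "h \<in> O(\<lambda>n. real n powr (-3/2))"
    unfolding h_def by real_asymp
  have eq: "(\<lambda>n. Delta n - 1 / (2 * sqrt (pi * real n))) = (\<lambda>n. f1 n + g n - h n)"
  proof
    fix n
    have d: "dseq n / 2 ^ n = Delta n + (1/2) / 2 ^ n" by (simp add: dseq_def add_divide_distrib)
    have s: "1 / (2 * sqrt pi) * (sqrt pi * an n) = an n / 2" by simp
    have t: "1 / (2 * sqrt (pi * real n)) = 1/2 * (1 / sqrt (pi * real n))" by simp
    show "Delta n - 1 / (2 * sqrt (pi * real n)) = f1 n + g n - h n"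
      unfolding f1_def g_def h_def Gamma_an d s t by (simp add: algebra_simps)
  qed
  have "(\<lambda>n. f1 n + g n) \<in> O(\<lambda>n. real n powr (-3/2))" by (rule sum_in_bigo(1)[OF P1 P2])
  then have "(\<lambda>n. f1 n + g n - h n) \<in> O(\<lambda>n. real n powr (-3/2))" by (rule sum_in_bigo(2)[OF _ P3])
  then show ?thesis using P1 unfolding eq f1_def by simp
qed

end
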